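(* Let $\gamma>0$, let $\mathcal{S}\subset\mathbb{T}$ be a measurable set of positive Lebesgue measure, and let $B_1,B_2\subset\mathbb{N}$ be finite sets such that $\gamma$ is a lower Riesz bound in $L^2(\mathcal{S})$ for both $E(B_1)$ and $E(B_2)$. Then for every $0<\gamma'<\gamma$ there exists $M\in\mathbb{Z}$ such that $\gamma'$ is a lower Riesz bound in $L^2(\mathcal{S})$ for $E(B_1\cup(M+B_2))$.
   Context: $\mathbb{T}=\mathbb{R}/2\pi\mathbb{Z}$. For $B\subset\mathbb{Z}$, $E(B):=\{e^{i\lambda t}\}_{\lambda\in B}$, and $M+B:=\{M+b:b\in B\}$. A positive number $\gamma$ is a lower Riesz bound in $L^2(\mathcal{S})$ for $E(B)$ if $\int_{\mathcal{S}}\big|\sum_{\lambda\in B}c(\lambda)e^{i\lambda t}\big|^2\frac{dt}{2\pi}\ge\gamma\sum_{\lambda\in B}|c(\lambda)|^2$ for every finite sequence of scalars $\{c(\lambda)\}_{\lambda\in B}$. *)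

theory Defs
  imports "HOL-Analysis.Analysis"
begin

text \<open>The circle T = R/2piZ is represented by the fundamental domain [0, 2pi);
  subsets of T are subsets of this interval, with Lebesgue measure.\<close>

definition lower_riesz_bound :: "real set \<Rightarrow> int set \<Rightarrow> real \<Rightarrow> bool" where
  "lower_riesz_bound S B \<gamma> \<longleftrightarrow> \<gamma> > 0 \<and>
     (\<forall>c :: int \<Rightarrow> complex.
        (LINT t:S|lebesgue. (cmod (\<Sum>l\<in>B. c l * exp (\<i> * of_int l * of_real t)))\<^sup>2) / (2 * pi)
          \<ge> \<gamma> * (\<Sum>l\<in>B. (cmod (c l))\<^sup>2))"

end

theory Submission
  imports Defs
begin

definition ee :: "int \<Rightarrow> real \<Rightarrow> complex" where
  "ee k t = exp (\<i> * of_int k * of_real t)"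
definition II :: "real set \<Rightarrow> int \<Rightarrow> complex" where
  "II S k = (LINT t:S|lebesgue. ee k t)"
definition BB :: "real set \<Rightarrow> int set \<Rightarrow> (int \<Rightarrow> complex) \<Rightarrow> (int \<Rightarrow> complex) \<Rightarrow> complex" where
  "BB S A c d = (\<Sum>l\<in>A. \<Sum>m\<in>A. c l * cnj (d m) * II S (l - m))"

lemma ee_mult: "ee l t * cnj (ee m t) = ee (l - m) t"
  unfolding ee_def exp_cnj by (simp add: exp_add[symmetric] algebra_simps)

lemma norm_ee[simp]: "norm (ee k t) = 1"
  unfolding ee_def by (metis mult.commute mult.left_commute norm_exp_i_times of_real_of_int_eq Re_complex_of_real  of_real_mult)

lemma cont_ee: "continuous_on UNIV (ee k)"
  unfolding ee_def by (intro continuous_intros)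

lemma int_ee:
  assumes "S \<in> sets lebesgue" "emeasure lebesgue S < \<infinity>"
  shows "integrable lebesgue (\<lambda>t. indicator S t *\<^sub>R ee k t)"
proof (rule Bochner_Integration.integrable_bound[where f="indicator S :: real \<Rightarrow> real"])
  show "integrable lebesgue (indicator S :: real \<Rightarrow> real)" using assms by simp
  have "ee k \<in> borel_measurable lebesgue"
    by (intro measurable_completion) (simp add: borel_measurable_continuous_onI cont_ee)
  then show "(\<lambda>t. indicator S t *\<^sub>R ee k t) \<in> borel_measurable lebesgue"
    using assms by (intro borel_measurable_scaleR) auto
  show "AE x in lebesgue. norm (indicator S x *\<^sub>R ee k x) \<le> norm (indicator S x :: real)"
    by (auto simp: indicator_def)
qed

lemma gram_pre:
  assumes S: "S \<in> sets lebesgue" "emeasure lebesgue S < \<infinity>" and A: "finite A"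
  shows "(LINT t:S|lebesgue. (\<Sum>l\<in>A. c l * ee l t) * cnj (\<Sum>m\<in>A. d m * ee m t)) = BB S A c d"
proof -
  have eq: "indicator S t *\<^sub>R ((\<Sum>l\<in>A. c l * ee l t) * cnj (\<Sum>m\<in>A. d m * ee m t))
      = (\<Sum>l\<in>A. \<Sum>m\<in>A. (c l * cnj (d m)) * (indicator S t *\<^sub>R ee (l - m) t))" for t
  proof -
    have "(\<Sum>l\<in>A. c l * ee l t) * cnj (\<Sum>m\<in>A. d m * ee m t)
        = (\<Sum>l\<in>A. \<Sum>m\<in>A. (c l * cnj (d m)) * (ee l t * cnj (ee m t)))"
      by (simp only: cnj_sum sum_product complex_cnj_mult) (simp add: ac_simps)
    then show ?thesis
      by (simp add: ee_mult scaleR_sum_right algebra_simps)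
  qed
  have "(LINT t:S|lebesgue. (\<Sum>l\<in>A. c l * ee l t) * cnj (\<Sum>m\<in>A. d m * ee m t))
      = integral\<^sup>L lebesgue (\<lambda>t. \<Sum>l\<in>A. \<Sum>m\<in>A. (c l * cnj (d m)) * (indicator S t *\<^sub>R ee (l - m) t))"
    unfolding set_lebesgue_integral_def eq ..
  also have "\<dots> = (\<Sum>l\<in>A. \<Sum>m\<in>A. (c l * cnj (d m)) * II S (l - m))"
  proof -
    have int: "integrable lebesgue (\<lambda>t. (c l * cnj (d m)) * (indicator S t *\<^sub>R ee (l-m) t))" for l m
      by (intro integrable_mult_right int_ee S)
    have "integral\<^sup>L lebesgue (\<lambda>t. \<Sum>l\<in>A. \<Sum>m\<in>A. (c l * cnj (d m)) * (indicator S t *\<^sub>R ee (l - m) t))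
       = (\<Sum>l\<in>A. integral\<^sup>L lebesgue (\<lambda>t. \<Sum>m\<in>A. (c l * cnj (d m)) * (indicator S t *\<^sub>R ee (l - m) t)))"
      by (rule Bochner_Integration.integral_sum) (intro Bochner_Integration.integrable_sum int)
    also have "\<dots> = (\<Sum>l\<in>A. \<Sum>m\<in>A. integral\<^sup>L lebesgue (\<lambda>t. (c l * cnj (d m)) * (indicator S t *\<^sub>R ee (l - m) t)))"
      by (intro sum.cong refl Bochner_Integration.integral_sum int)
    finally show ?thesis unfolding II_def set_lebesgue_integral_def integral_mult_right_zero .
  qed
  finally show ?thesis unfolding BB_def .
qed

lemma gram:
  assumes S: "S \<in> sets lebesgue" "emeasure lebesgue S < \<infinity>" and A: "finite A"
  shows "complex_of_real (LINT t:S|lebesgue. (cmod (\<Sum>l\<in>A. c l * ee l t))\<^sup>2) = BB S A c c"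
proof -
  have "complex_of_real (LINT t:S|lebesgue. (cmod (\<Sum>l\<in>A. c l * ee l t))\<^sup>2)
     = (LINT t:S|lebesgue. complex_of_real ((cmod (\<Sum>l\<in>A. c l * ee l t))\<^sup>2))"
    unfolding set_lebesgue_integral_def
    by (subst integral_complex_of_real[symmetric]) (simp add: scaleR_conv_of_real)
  also have "\<dots> = (LINT t:S|lebesgue. (\<Sum>l\<in>A. c l * ee l t) * cnj (\<Sum>m\<in>A. c m * ee m t))"
    by (simp only: complex_norm_square)
  finally show ?thesis using gram_pre[OF assms] by simp
qed

lemma gramRe:
  assumes S: "S \<in> sets lebesgue" "emeasure lebesgue S < \<infinity>" and A: "finite A"
  shows "(LINT t:S|lebesgue. (cmod (\<Sum>l\<in>A. c l * ee l t))\<^sup>2) = Re (BB S A c c)"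
  using arg_cong[where f=Re, OF gram[OF assms, of c]] by simp

lemma II_neg: "II S (- k) = cnj (II S k)"
proof -
  have "II S (-k) = (LINT t:S|lebesgue. cnj (ee k t))"
    unfolding II_def ee_def exp_cnj by simp
  also have "\<dots> = cnj (II S k)"
    unfolding II_def set_lebesgue_integral_def
    by (subst Bochner_Integration.integral_cnj[symmetric]) (simp add: scaleR_conv_of_real)
  finally show ?thesis .
qed

lemma T_meas: "{0..2*pi} \<in> sets lebesgue" "emeasure lebesgue {0..2*pi::real} < \<infinity>"
  using lmeasurable_interval(1)[of 0 "2*pi"] by (auto simp: fmeasurable_def)

lemma II_T: "II {0..2*pi} k = (if k = 0 then complex_of_real (2*pi) else 0)"
proof -
  have si: "set_integrable lebesgue {0..2*pi} (ee k)"
    unfolding set_integrable_def using int_ee[OF T_meas] .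
  have eq: "II {0..2*pi} k = integral {0..2*pi} (ee k)"
    unfolding II_def using set_lebesgue_integral_eq_integral(2)[OF si] .
  show ?thesis
  proof (cases "k = 0")
    case True
    have "ee 0 = (\<lambda>_. 1)" by (rule ext) (simp add: ee_def)
    then show ?thesis unfolding eq using True by (simp add: scaleR_conv_of_real)
  next
    case False
    define F where "F = (\<lambda>z::complex. exp (\<i> * of_int k * z) / (\<i> * of_int k))"
    have d: "((\<lambda>x. F (of_real x)) has_vector_derivative ee k x) (at x within {0..2*pi})" for x
    proof -
      have "(F has_field_derivative exp (\<i> * of_int k * of_real x)) (at (of_real x))"
        unfolding F_def using False
        by (auto intro!: derivative_eq_intros simp: field_simps)
      then show ?thesis unfolding ee_def by (rule has_vector_derivative_real_field)
    qed
    have "(ee k has_integral (F (of_real (2*pi)) - F (of_real 0))) {0..2*pi}"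
      by (rule fundamental_theorem_of_calculus) (use d in auto)
    moreover have "F (of_real (2*pi)) - F (of_real 0) = 0"
    proof -
      have "exp (\<i> * of_int k * of_real (2*pi)) = 1"
        using exp_integer_2pi[of "of_int k"] by (simp add: ac_simps)
      then show ?thesis by (simp add: F_def)
    qed
    ultimately show ?thesis unfolding eq using False by (simp add: integral_unique)
  qed
qed

lemma BB_T: assumes "finite A" shows "BB {0..2*pi} A d d = complex_of_real (2*pi * (\<Sum>l\<in>A. (cmod (d l))\<^sup>2))"
proof -
  have "BB {0..2*pi} A d d = (\<Sum>l\<in>A. \<Sum>m\<in>A. if m = l then d l * cnj (d l) * complex_of_real (2*pi) else 0)"
    unfolding BB_def II_T by (intro sum.cong refl) auto
  also have "\<dots> = (\<Sum>l\<in>A. if l \<in> A then d l * cnj (d l) * complex_of_real (2*pi) else 0)"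
    using assms by (simp add: sum.delta)
  also have "\<dots> = (\<Sum>l\<in>A. complex_of_real (2*pi * (cmod (d l))\<^sup>2))"
    by (intro sum.cong refl) (simp add: complex_norm_square[symmetric] mult_ac)
  finally show ?thesis by (simp add: sum_distrib_left)
qed

lemma cont_P: "continuous_on UNIV (\<lambda>t. (cmod (\<Sum>l\<in>A. c l * ee l t))\<^sup>2)"
  unfolding ee_def by (intro continuous_intros)

lemma bound_P: "(cmod (\<Sum>l\<in>A. c l * ee l t))\<^sup>2 \<le> (\<Sum>l\<in>A. cmod (c l))\<^sup>2"
proof -
  have "cmod (\<Sum>l\<in>A. c l * ee l t) \<le> (\<Sum>l\<in>A. cmod (c l * ee l t))" by (rule norm_sum)
  also have "\<dots> = (\<Sum>l\<in>A. cmod (c l))" by (simp add: norm_mult)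
  finally show ?thesis by (intro power_mono) auto
qed

lemma int_P:
  assumes S: "S \<in> sets lebesgue" "emeasure lebesgue S < \<infinity>"
  shows "set_integrable lebesgue S (\<lambda>t. (cmod (\<Sum>l\<in>A. c l * ee l t))\<^sup>2)"
  unfolding set_integrable_def
proof (rule Bochner_Integration.integrable_bound[where f="\<lambda>t. (\<Sum>l\<in>A. cmod (c l))\<^sup>2 * indicator S t :: real"])
  show "integrable lebesgue (\<lambda>t. (\<Sum>l\<in>A. cmod (c l))\<^sup>2 * indicator S t :: real)"
    using S by (intro integrable_mult_right) simp
  have "(\<lambda>t. (cmod (\<Sum>l\<in>A. c l * ee l t))\<^sup>2) \<in> borel_measurable lebesgue"
    by (intro measurable_completion) (simp add: borel_measurable_continuous_onI cont_P)
  then show "(\<lambda>t. indicator S t *\<^sub>R (cmod (\<Sum>l\<in>A. c l * ee l t))\<^sup>2) \<in> borel_measurable lebesgue"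
    using S by (intro borel_measurable_scaleR) auto
  show "AE x in lebesgue. norm (indicator S x *\<^sub>R (cmod (\<Sum>l\<in>A. c l * ee l x))\<^sup>2)
      \<le> norm ((\<Sum>l\<in>A. cmod (c l))\<^sup>2 * indicator S x :: real)"
    using bound_P[where A=A and c=c] by (auto simp: indicator_def)
qed

lemma mono_S:
  assumes S: "S \<in> sets lebesgue" "S \<subseteq> {0..2*pi}"
  shows "(LINT t:S|lebesgue. (cmod (\<Sum>l\<in>A. c l * ee l t))\<^sup>2)
       \<le> (LINT t:{0..2*pi}|lebesgue. (cmod (\<Sum>l\<in>A. c l * ee l t))\<^sup>2)"
proof -
  have fin: "emeasure lebesgue S < \<infinity>"
    using emeasure_mono[OF S(2) T_meas(1)] T_meas(2) by (meson le_less_trans)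
  let ?g = "\<lambda>t. (cmod (\<Sum>l\<in>A. c l * ee l t))\<^sup>2"
  have i1: "integrable lebesgue (\<lambda>t. indicator S t *\<^sub>R ?g t)"
    using int_P[OF S(1) fin] unfolding set_integrable_def .
  have i2: "integrable lebesgue (\<lambda>t. indicator {0..2*pi} t *\<^sub>R ?g t)"
    using int_P[OF T_meas] unfolding set_integrable_def .
  show ?thesis unfolding set_lebesgue_integral_def
    by (rule integral_mono[OF i1 i2]) (use S(2) in \<open>auto simp: indicator_def\<close>)
qed

lemma BB_diff: "BB S A (\<lambda>k. c k - d k) (\<lambda>k. c k - d k) = BB S A c c - BB S A c d - BB S A d c + BB S A d d"
  unfolding BB_def by (simp add: algebra_simps sum_subtractf sum.distrib)

lemma bessel:
  assumes S: "S \<in> sets lebesgue" "S \<subseteq> {0..2*pi}" and F: "finite F"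
  shows "(\<Sum>k\<in>F. (cmod (II S k))\<^sup>2) \<le> 2*pi * measure lebesgue S"
proof -
  have fin: "emeasure lebesgue S < \<infinity>"
    using emeasure_mono[OF S(2) T_meas(1)] T_meas(2) by (meson le_less_trans)
  define A where "A = insert 0 F"
  have A: "finite A" "0 \<in> A" "F \<subseteq> A" using F by (auto simp: A_def)
  have AF: "{m \<in> A. m \<in> F} = F" by (auto simp: A_def)
  define \<delta> :: "int \<Rightarrow> complex" where "\<delta> k = (if k = 0 then 1 else 0)" for k
  define d where "d k = (if k \<in> F then cnj (II S k) / complex_of_real (2*pi) else 0)" for k
  define X where "X = (\<Sum>k\<in>F. (cmod (II S k))\<^sup>2)"
  have nsq: "II S x * cnj (II S x) = complex_of_real ((cmod (II S x))\<^sup>2)" for x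
    by (simp only: complex_norm_square)
  have nsq': "cnj (II S x) * II S x = complex_of_real ((cmod (II S x))\<^sup>2)" for x
    by (simp only: complex_norm_square mult.commute)
  have "0 \<le> (LINT t:S|lebesgue. (cmod (\<Sum>l\<in>A. (\<delta> l - d l) * ee l t))\<^sup>2)"
    unfolding set_lebesgue_integral_def by (intro Bochner_Integration.integral_nonneg) auto
  then have g0: "0 \<le> Re (BB S A (\<lambda>k. \<delta> k - d k) (\<lambda>k. \<delta> k - d k))"
    using gramRe[OF S(1) fin A(1), of "\<lambda>k. \<delta> k - d k"] by simp
  have "Re (BB S A d d) = (LINT t:S|lebesgue. (cmod (\<Sum>l\<in>A. d l * ee l t))\<^sup>2)"
    using gramRe[OF S(1) fin A(1), of d] by simp
  also have "\<dots> \<le> (LINT t:{0..2*pi}|lebesgue. (cmod (\<Sum>l\<in>A. d l * ee l t))\<^sup>2)"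
    by (rule mono_S[OF S])
  also have "\<dots> = Re (BB {0..2*pi} A d d)"
    using gramRe[OF T_meas A(1), of d] by simp
  also have "\<dots> = 2*pi * (\<Sum>l\<in>A. (cmod (d l))\<^sup>2)"
    unfolding BB_T[OF A(1)] by simp
  also have "(\<Sum>l\<in>A. (cmod (d l))\<^sup>2) = (\<Sum>l\<in>A. if l \<in> F then (cmod (II S l))\<^sup>2 / (2*pi)^2 else 0)"
    by (intro sum.cong refl) (auto simp: d_def norm_divide power_divide)
  also have "\<dots> = X / (2*pi)^2"
    unfolding X_def sum.inter_filter[OF A(1), symmetric] AF by (simp add: sum_divide_distrib)
  finally have hdd: "Re (BB S A d d) \<le> X / (2*pi)"
    by (simp add: power2_eq_square)
  have "BB S A \<delta> \<delta> = (\<Sum>l\<in>A. if l = 0 then II S 0 else 0)"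
  proof -
    have c: "cnj (\<delta> m) = \<delta> m" for m by (simp add: \<delta>_def)
    have e: "\<delta> m * II S (- m) = (if m = 0 then II S 0 else 0)" for m by (simp add: \<delta>_def)
    have "(\<Sum>m\<in>A. \<delta> m * II S (- m)) = II S 0" using A
      unfolding e by (simp add: sum.delta)
    then show ?thesis
      unfolding BB_def c by (intro sum.cong refl) (auto simp: \<delta>_def)
  qed
  also have "\<dots> = II S 0" using A by (simp add: sum.delta)
  also have "\<dots> = complex_of_real (measure lebesgue S)"
  proof -
    have "ee 0 = (\<lambda>_. 1)" by (rule ext) (simp add: ee_def)
    moreover have "emeasure lebesgue S \<noteq> \<infinity>" using fin by simp
    ultimately show ?thesis unfolding II_def using set_integral_const[OF S(1), of "1::complex"]
      by (simp add: scaleR_conv_of_real)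
  qed
  finally have hdd0: "BB S A \<delta> \<delta> = complex_of_real (measure lebesgue S)" .
  have "BB S A \<delta> d = (\<Sum>l\<in>A. if l = 0 then (\<Sum>m\<in>A. cnj (d m) * II S (- m)) else 0)"
    unfolding BB_def \<delta>_def by (intro sum.cong refl) auto
  also have "\<dots> = (\<Sum>m\<in>A. cnj (d m) * II S (- m))" using A by (simp add: sum.delta)
  also have "\<dots> = (\<Sum>m\<in>A. if m \<in> F then complex_of_real ((cmod (II S m))\<^sup>2 / (2*pi)) else 0)"
    by (intro sum.cong refl) (auto simp: d_def II_neg nsq simp del: of_real_power)
  also have "\<dots> = complex_of_real (X / (2*pi))"
    unfolding X_def sum.inter_filter[OF A(1), symmetric] AF by (simp add: sum_divide_distrib)
  finally have h1: "BB S A \<delta> d = complex_of_real (X / (2*pi))" .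
  have "BB S A d \<delta> = (\<Sum>l\<in>A. d l * II S l)"
  proof -
    have e: "d l * cnj (\<delta> m) * II S (l - m) = (if m = 0 then d l * II S l else 0)" for l m
      by (simp add: \<delta>_def)
    show ?thesis unfolding BB_def e using A by (simp add: sum.delta)
  qed
  also have "\<dots> = (\<Sum>m\<in>A. if m \<in> F then complex_of_real ((cmod (II S m))\<^sup>2 / (2*pi)) else 0)"
    by (intro sum.cong refl) (auto simp: d_def nsq' simp del: of_real_power)
  also have "\<dots> = complex_of_real (X / (2*pi))"
    unfolding X_def sum.inter_filter[OF A(1), symmetric] AF by (simp add: sum_divide_distrib)
  finally have h2: "BB S A d \<delta> = complex_of_real (X / (2*pi))" .
  from g0 hdd hdd0 h1 h2 have "0 \<le> measure lebesgue S - X / (2*pi)"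
    unfolding BB_diff by simp
  then show ?thesis unfolding X_def[symmetric] by (simp add: field_simps)
qed

lemma RL:
  assumes S: "S \<in> sets lebesgue" "S \<subseteq> {0..2*pi}" and e: "\<epsilon> > 0"
  shows "\<exists>N::int. N \<ge> 0 \<and> (\<forall>k. N \<le> \<bar>k\<bar> \<longrightarrow> cmod (II S k) \<le> \<epsilon>)"
proof -
  define Bad where "Bad = {k. \<epsilon> < cmod (II S k)}"
  define C where "C = nat \<lceil>2*pi * measure lebesgue S / \<epsilon>\<^sup>2\<rceil>"
  have "finite Bad \<and> card Bad \<le> C"
  proof (rule finite_if_finite_subsets_card_bdd)
    fix G assume G: "G \<subseteq> Bad" "finite G"
    have "real (card G) * \<epsilon>\<^sup>2 = (\<Sum>k\<in>G. \<epsilon>\<^sup>2)" by simp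
    also have "\<dots> \<le> (\<Sum>k\<in>G. (cmod (II S k))\<^sup>2)"
    proof (rule sum_mono)
      fix k assume "k \<in> G"
      then have "\<epsilon> < cmod (II S k)" using G by (auto simp: Bad_def)
      then show "\<epsilon>\<^sup>2 \<le> (cmod (II S k))\<^sup>2" using e by (intro power_mono) auto
    qed
    also have "\<dots> \<le> 2*pi * measure lebesgue S" by (rule bessel[OF S G(2)])
    finally have "real (card G) \<le> 2*pi * measure lebesgue S / \<epsilon>\<^sup>2"
      using e by (simp add: field_simps)
    then show "card G \<le> C" unfolding C_def by linarith
  qed
  then have fB: "finite Bad" by blast
  define N where "N = (\<Sum>k\<in>Bad. \<bar>k\<bar>) + 1"
  have "N \<ge> 0" unfolding N_def by (simp add: sum_nonneg add_nonneg_nonneg)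
  moreover have "cmod (II S k) \<le> \<epsilon>" if "N \<le> \<bar>k\<bar>" for k
  proof (rule ccontr)
    assume "\<not> ?thesis"
    then have "k \<in> Bad" by (auto simp: Bad_def)
    then have "\<bar>k\<bar> \<le> (\<Sum>k\<in>Bad. \<bar>k\<bar>)" using fB by (intro member_le_sum) auto
    then show False using that unfolding N_def by simp
  qed
  ultimately show ?thesis by blast
qed

lemma cross:
  assumes "\<And>l m. l \<in> P \<Longrightarrow> m \<in> Q \<Longrightarrow> cmod (II S (l - m)) \<le> \<epsilon>"
  shows "cmod (\<Sum>l\<in>P. \<Sum>m\<in>Q. c l * cnj (c m) * II S (l - m))
      \<le> \<epsilon> * (\<Sum>l\<in>P. \<Sum>m\<in>Q. cmod (c l) * cmod (c m))"
proof -
  have "cmod (\<Sum>l\<in>P. \<Sum>m\<in>Q. c l * cnj (c m) * II S (l - m))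
      \<le> (\<Sum>l\<in>P. cmod (\<Sum>m\<in>Q. c l * cnj (c m) * II S (l - m)))" by (rule norm_sum)
  also have "\<dots> \<le> (\<Sum>l\<in>P. \<Sum>m\<in>Q. cmod (c l * cnj (c m) * II S (l - m)))"
    by (intro sum_mono norm_sum)
  also have "\<dots> \<le> (\<Sum>l\<in>P. \<Sum>m\<in>Q. \<epsilon> * (cmod (c l) * cmod (c m)))"
  proof (intro sum_mono)
    fix l m assume "l \<in> P" "m \<in> Q"
    then have "cmod (II S (l - m)) \<le> \<epsilon>" by (rule assms)
    then show "cmod (c l * cnj (c m) * II S (l - m)) \<le> \<epsilon> * (cmod (c l) * cmod (c m))"
    proof -
      have "cmod (c l) * cmod (c m) * cmod (II S (l - m)) \<le> cmod (c l) * cmod (c m) * \<epsilon>"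
        using \<open>cmod (II S (l - m)) \<le> \<epsilon>\<close> by (intro mult_left_mono) auto
      then show ?thesis by (simp add: norm_mult mult.commute mult.left_commute)
    qed
  qed
  also have "\<dots> = \<epsilon> * (\<Sum>l\<in>P. \<Sum>m\<in>Q. cmod (c l) * cmod (c m))"
    by (simp add: sum_distrib_left)
  finally show ?thesis .
qed

lemma amgm:
  fixes a :: "int \<Rightarrow> real"
  assumes "finite P" "finite Q"
  shows "2 * (\<Sum>l\<in>P. \<Sum>m\<in>Q. a l * a m) \<le> real (card Q) * (\<Sum>l\<in>P. (a l)\<^sup>2) + real (card P) * (\<Sum>m\<in>Q. (a m)\<^sup>2)"
proof -
  have "2 * (\<Sum>l\<in>P. \<Sum>m\<in>Q. a l * a m) = (\<Sum>l\<in>P. \<Sum>m\<in>Q. 2 * (a l * a m))"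
    by (simp add: sum_distrib_left)
  also have "\<dots> \<le> (\<Sum>l\<in>P. \<Sum>m\<in>Q. (a l)\<^sup>2 + (a m)\<^sup>2)"
  proof (intro sum_mono)
    fix l m
    have "0 \<le> (a l - a m)\<^sup>2" by simp
    then show "2 * (a l * a m) \<le> (a l)\<^sup>2 + (a m)\<^sup>2" by (simp add: power2_eq_square algebra_simps)
  qed
  also have "\<dots> = real (card Q) * (\<Sum>l\<in>P. (a l)\<^sup>2) + real (card P) * (\<Sum>m\<in>Q. (a m)\<^sup>2)"
    by (simp add: sum.distrib sum_distrib_left mult.commute)
  finally show ?thesis .
qed

theorem lemma8:
  fixes \<gamma> \<gamma>' :: real and S :: "real set" and B1 B2 :: "nat set"
  assumes "\<gamma> > 0"
    and "S \<subseteq> {0..<2*pi}" and "S \<in> sets lebesgue" and "emeasure lebesgue S > 0"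
    and "finite B1" and "finite B2"
    and "lower_riesz_bound S (int ` B1) \<gamma>"
    and "lower_riesz_bound S (int ` B2) \<gamma>"
    and "0 < \<gamma>'" and "\<gamma>' < \<gamma>"
  shows "\<exists>M :: int. lower_riesz_bound S (int ` B1 \<union> (\<lambda>b. M + int b) ` B2) \<gamma>'"
proof -
  have S: "S \<in> sets lebesgue" using assms(3) .
  have Ssub: "S \<subseteq> {0..2*pi}" using assms(2) by auto
  have fin: "emeasure lebesgue S < \<infinity>"
    using emeasure_mono[OF Ssub T_meas(1)] T_meas(2) by (meson le_less_trans)
  have G: "(LINT t:S|lebesgue. (cmod (\<Sum>l\<in>A. c l * exp (\<i> * of_int l * of_real t)))\<^sup>2) = Re (BB S A c c)"
    if "finite A" for A c
    using gramRe[OF S fin that, of c] unfolding ee_def by simp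
  define K where "K = real (card B1 + card B2) + 1"
  have K: "K > 0" unfolding K_def by simp
  define \<epsilon> where "\<epsilon> = 2*pi*(\<gamma> - \<gamma>')/K"
  have e: "\<epsilon> > 0" unfolding \<epsilon>_def using K assms(10) by simp
  obtain N where N: "N \<ge> 0" "\<And>k. N \<le> \<bar>k\<bar> \<Longrightarrow> cmod (II S k) \<le> \<epsilon>"
    using RL[OF S Ssub e] by blast
  define M where "M = N + int (\<Sum> B1) + 1"
  define A1 where "A1 = int ` B1"
  define A2 where "A2 = (\<lambda>b. M + int b) ` B2"
  have fA: "finite A1" "finite A2" using assms(5,6) by (auto simp: A1_def A2_def)
  have sep: "N + 1 \<le> m - l" if lm: "l \<in> A1" "m \<in> A2" for l m
  proof -
    obtain b1 b2 where b: "b1 \<in> B1" "b2 \<in> B2" "l = int b1" "m = M + int b2"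
      using lm unfolding A1_def A2_def by blast
    have "b1 \<le> \<Sum> B1" using assms(5) b(1) by (intro member_le_sum) auto
    then show ?thesis unfolding b M_def by linarith
  qed
  have disj: "A1 \<inter> A2 = {}" using sep N(1) by fastforce
  have X: "cmod (\<Sum>l\<in>A1. \<Sum>m\<in>A2. c l * cnj (c m) * II S (l - m))
      \<le> \<epsilon> * (\<Sum>l\<in>A1. \<Sum>m\<in>A2. cmod (c l) * cmod (c m))" for c
    by (rule cross) (rule N(2), use sep in \<open>force\<close>)
  have Y: "cmod (\<Sum>l\<in>A2. \<Sum>m\<in>A1. c l * cnj (c m) * II S (l - m))
      \<le> \<epsilon> * (\<Sum>l\<in>A2. \<Sum>m\<in>A1. cmod (c l) * cmod (c m))" for c
    by (rule cross) (rule N(2), use sep in \<open>force\<close>)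
  have cA1: "real (card A1) \<le> K" unfolding A1_def K_def using card_image_le[OF assms(5), of int] by simp
  have cA2: "real (card A2) \<le> K" unfolding A2_def K_def using card_image_le[OF assms(6), of "\<lambda>b. M + int b"] by simp
  have A2eq: "A2 = (\<lambda>k. M + k) ` (int ` B2)" unfolding A2_def by (simp add: image_image)
  have inj: "inj_on (\<lambda>k. M + k) (int ` B2)" by (auto simp: inj_on_def)
  show ?thesis
  proof (intro exI[of _ M])
    show "lower_riesz_bound S (int ` B1 \<union> (\<lambda>b. M + int b) ` B2) \<gamma>'"
      unfolding lower_riesz_bound_def A1_def[symmetric] A2_def[symmetric]
    proof (intro conjI allI)
      show "0 < \<gamma>'" by fact
      fix c :: "int \<Rightarrow> complex"
      define s1 where "s1 = (\<Sum>l\<in>A1. (cmod (c l))\<^sup>2)"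
      define s2 where "s2 = (\<Sum>l\<in>A2. (cmod (c l))\<^sup>2)"
      have s: "s1 \<ge> 0" "s2 \<ge> 0" unfolding s1_def s2_def by (auto intro: sum_nonneg)
      have h1: "Re (BB S A1 c c) \<ge> 2*pi*\<gamma> * s1"
      proof -
        have "\<gamma> * s1 \<le> (LINT t:S|lebesgue. (cmod (\<Sum>l\<in>A1. c l * exp (\<i> * of_int l * of_real t)))\<^sup>2) / (2*pi)"
          using assms(7) unfolding lower_riesz_bound_def A1_def[symmetric] s1_def by blast
        then show ?thesis using G[OF fA(1), of c] by (simp add: field_simps)
      qed
      define c' where "c' k = c (M + k)" for k
      have "Re (BB S (int ` B2) c' c') \<ge> 2*pi*\<gamma>*(\<Sum>l\<in>int ` B2. (cmod (c' l))\<^sup>2)"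
      proof -
        have "\<gamma> * (\<Sum>l\<in>int ` B2. (cmod (c' l))\<^sup>2) \<le> (LINT t:S|lebesgue. (cmod (\<Sum>l\<in>int ` B2. c' l * exp (\<i> * of_int l * of_real t)))\<^sup>2) / (2*pi)"
          using assms(8) unfolding lower_riesz_bound_def by blast
        then show ?thesis using G[of "int ` B2" c'] assms(6) by (simp add: field_simps)
      qed
      moreover have "BB S A2 c c = BB S (int ` B2) c' c'"
        unfolding BB_def A2eq sum.reindex[OF inj] c'_def by simp
      moreover have "s2 = (\<Sum>l\<in>int ` B2. (cmod (c' l))\<^sup>2)"
        unfolding s2_def A2eq sum.reindex[OF inj] c'_def by simp
      ultimately have h2: "Re (BB S A2 c c) \<ge> 2*pi*\<gamma> * s2" by simp
      have split: "BB S (A1 \<union> A2) c c = BB S A1 c c + BB S A2 c c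
          + (\<Sum>l\<in>A1. \<Sum>m\<in>A2. c l * cnj (c m) * II S (l - m))
          + (\<Sum>l\<in>A2. \<Sum>m\<in>A1. c l * cnj (c m) * II S (l - m))"
        unfolding BB_def using fA disj by (simp add: sum.union_disjoint sum.distrib)
      define T1 where "T1 = (\<Sum>l\<in>A1. \<Sum>m\<in>A2. cmod (c l) * cmod (c m))"
      define T2 where "T2 = (\<Sum>l\<in>A2. \<Sum>m\<in>A1. cmod (c l) * cmod (c m))"
      have "2 * T1 \<le> real (card A2) * s1 + real (card A1) * s2"
        unfolding T1_def s1_def s2_def by (rule amgm[OF fA])
      also have "\<dots> \<le> K * s1 + K * s2"
        using cA1 cA2 s by (intro add_mono mult_right_mono) auto
      finally have t1: "2 * T1 \<le> K * (s1 + s2)" by (simp add: algebra_simps)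
      have "2 * T2 \<le> real (card A1) * s2 + real (card A2) * s1"
        unfolding T2_def s1_def s2_def by (rule amgm[OF fA(2,1)])
      also have "\<dots> \<le> K * s2 + K * s1"
        using cA1 cA2 s by (intro add_mono mult_right_mono) auto
      finally have t2: "2 * T2 \<le> K * (s1 + s2)" by (simp add: algebra_simps)
      have eK: "\<epsilon> * K = 2*pi*(\<gamma> - \<gamma>')" unfolding \<epsilon>_def using K by simp
      have a: "\<epsilon> * (2 * T1) \<le> \<epsilon> * (K * (s1 + s2))" using t1 e by (intro mult_left_mono) auto
      have b: "\<epsilon> * (2 * T2) \<le> \<epsilon> * (K * (s1 + s2))" using t2 e by (intro mult_left_mono) auto
      have c2: "\<epsilon> * (2 * T1) = 2 * (\<epsilon> * T1)" "\<epsilon> * (2 * T2) = 2 * (\<epsilon> * T2)" by simp_all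
      have c3: "\<epsilon> * (K * (s1 + s2)) = 2*pi*(\<gamma> - \<gamma>') * (s1 + s2)"
        using eK by (metis mult.assoc)
      have tt: "\<epsilon> * T1 + \<epsilon> * T2 \<le> 2*pi*(\<gamma> - \<gamma>') * (s1 + s2)"
        using a b unfolding c2 c3 by linarith
      have x1: "- (\<epsilon> * T1) \<le> Re (\<Sum>l\<in>A1. \<Sum>m\<in>A2. c l * cnj (c m) * II S (l - m))"
        using X[of c] abs_Re_le_cmod[of "\<Sum>l\<in>A1. \<Sum>m\<in>A2. c l * cnj (c m) * II S (l - m)"]
        unfolding T1_def by linarith
      have x2: "- (\<epsilon> * T2) \<le> Re (\<Sum>l\<in>A2. \<Sum>m\<in>A1. c l * cnj (c m) * II S (l - m))"
        using Y[of c] abs_Re_le_cmod[of "\<Sum>l\<in>A2. \<Sum>m\<in>A1. c l * cnj (c m) * II S (l - m)"]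
        unfolding T2_def by linarith
      have "Re (BB S (A1 \<union> A2) c c) \<ge> 2*pi*\<gamma>' * (s1 + s2)"
        unfolding split using h1 h2 x1 x2 tt by (simp add: algebra_simps)
      moreover have "(\<Sum>l\<in>A1 \<union> A2. (cmod (c l))\<^sup>2) = s1 + s2"
        unfolding s1_def s2_def using fA disj by (simp add: sum.union_disjoint)
      ultimately show "\<gamma>' * (\<Sum>l\<in>A1 \<union> A2. (cmod (c l))\<^sup>2)
          \<le> (LINT t:S|lebesgue. (cmod (\<Sum>l\<in>A1 \<union> A2. c l * exp (\<i> * of_int l * of_real t)))\<^sup>2) / (2*pi)"
        using G[of "A1 \<union> A2" c] fA by (simp add: field_simps)
    qed
  qed
qed

end
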